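(* Let $S=\{s_1,\dots,s_p\}$ and let $F=\{C_1,\dots,C_q\}$ be a family of subsets of $S$ with $q\le p$ and $\bigcup_j C_j=S$. Construct the graph $G$ as follows: vertices $a_1,\dots,a_p$, $b_1,\dots,b_q$, $z_1,\dots,z_p$, $r_1,\dots,r_{p+1}$, $w$, $r'_{p+1}$; edges $a_ib_j$ whenever $s_i\in C_j$, $a_iz_i$ for all $i\in[p]$, $b_ir_j$ for all $i\in[q]$ and $j\in[p+1]$, and $r_{p+1}w$, $wr'_{p+1}$. Then $G$ is a comb-convex bipartite graph with parts $X=\{a_1,\dots,a_p,r_1,\dots,r_{p+1},r'_{p+1}\}$ and $Y=\{b_1,\dots,b_q,z_1,\dots,z_p,w\}$ (with respect to the comb on $X$ with backbone path $r_1r_2\cdots r_{p+1}$ and teeth $a_i$ attached to $r_i$ for $i\in[p]$ and $r'_{p+1}$ attached to $r_{p+1}$), and for every nonnegative integer $t$, $S$ has a cover of size at most $t$ if and only if $G$ has a vertex-edge dominating set of size at most $t+1$.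
   Context: A cover of $S$ in the set system $(S,F)$ is a subfamily $C\subseteq F$ whose union is $S$. A vertex-edge dominating set of a graph $G$ is a set $D\subseteq V(G)$ such that for every edge $uv$, $(N_G[u]\cup N_G[v])\cap D\neq\emptyset$, where $N_G[x]$ is the closed neighbourhood of $x$. A comb is a tree obtained from a path (the backbone) by attaching one pendant vertex (a tooth) to each vertex of the path. A bipartite graph $G=(X\cup Y,E)$ is comb-convex if there is a comb $T$ with vertex set $X$ such that for every $y\in Y$, $N_G(y)$ induces a subtree of $T$. *)

theory Defs
  imports Main
begin

definition closed_nbhd :: "'v set set \<Rightarrow> 'v \<Rightarrow> 'v set" where
  "closed_nbhd E x = {x} \<union> {y. {x, y} \<in> E}"

definition open_nbhd :: "'v set set \<Rightarrow> 'v \<Rightarrow> 'v set" where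
  "open_nbhd E x = {y. {x, y} \<in> E \<and> y \<noteq> x}"

definition vertex_edge_dominating :: "'v set \<Rightarrow> 'v set set \<Rightarrow> 'v set \<Rightarrow> bool" where
  "vertex_edge_dominating V E D \<longleftrightarrow> D \<subseteq> V \<and>
     (\<forall>u v. {u, v} \<in> E \<longrightarrow> (closed_nbhd E u \<union> closed_nbhd E v) \<inter> D \<noteq> {})"

definition bipartite_parts :: "'v set \<Rightarrow> 'v set set \<Rightarrow> 'v set \<Rightarrow> 'v set \<Rightarrow> bool" where
  "bipartite_parts V E X Y \<longleftrightarrow> X \<inter> Y = {} \<and> X \<union> Y = V \<and>
     (\<forall>e\<in>E. \<exists>x\<in>X. \<exists>y\<in>Y. e = {x, y})"

definition is_comb :: "'v set \<Rightarrow> 'v set set \<Rightarrow> bool" where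
  "is_comb VT ET \<longleftrightarrow> (\<exists>ps ts. ps \<noteq> [] \<and> length ts = length ps \<and> distinct (ps @ ts) \<and>
     VT = set ps \<union> set ts \<and>
     ET = {{ps ! i, ps ! (i + 1)} | i. i + 1 < length ps} \<union> {{ps ! i, ts ! i} | i. i < length ps})"

definition induces_subtree :: "'v set \<Rightarrow> 'v set set \<Rightarrow> 'v set \<Rightarrow> bool" where
  "induces_subtree VT ET U \<longleftrightarrow> U \<noteq> {} \<and> U \<subseteq> VT \<and>
     (\<forall>u\<in>U. \<forall>v\<in>U. (u, v) \<in> {(x, y). x \<in> U \<and> y \<in> U \<and> {x, y} \<in> ET}\<^sup>*)"

definition comb_convex_wrt :: "'v set set \<Rightarrow> 'v set \<Rightarrow> 'v set \<Rightarrow> 'v set set \<Rightarrow> bool" where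
  "comb_convex_wrt E X Y ET \<longleftrightarrow> is_comb X ET \<and> (\<forall>y\<in>Y. induces_subtree X ET (open_nbhd E y))"

definition comb_convex_bipartite :: "'v set \<Rightarrow> 'v set set \<Rightarrow> 'v set \<Rightarrow> 'v set \<Rightarrow> bool" where
  "comb_convex_bipartite V E X Y \<longleftrightarrow> bipartite_parts V E X Y \<and> (\<exists>ET. comb_convex_wrt E X Y ET)"

definition is_cover :: "'a set \<Rightarrow> 'a set set \<Rightarrow> 'a set set \<Rightarrow> bool" where
  "is_cover S F Cs \<longleftrightarrow> Cs \<subseteq> F \<and> \<Union>Cs = S"

section \<open>The construction (0-based indices: s_i = i for i < p, C j for j < q,
  r_1..r_{p+1} are R 0 .. R p)\<close>

datatype vtx = A nat | B nat | Z nat | R nat | W | R'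

definition GV :: "nat \<Rightarrow> nat \<Rightarrow> vtx set" where
  "GV p q = A ` {..<p} \<union> B ` {..<q} \<union> Z ` {..<p} \<union> R ` {..p} \<union> {W, R'}"

definition GE :: "nat \<Rightarrow> nat \<Rightarrow> (nat \<Rightarrow> nat set) \<Rightarrow> vtx set set" where
  "GE p q C = {{A i, B j} | i j. i < p \<and> j < q \<and> i \<in> C j}
            \<union> {{A i, Z i} | i. i < p}
            \<union> {{B i, R j} | i j. i < q \<and> j \<le> p}
            \<union> {{R p, W}, {W, R'}}"

definition GX :: "nat \<Rightarrow> vtx set" where
  "GX p = A ` {..<p} \<union> R ` {..p} \<union> {R'}"

definition GY :: "nat \<Rightarrow> nat \<Rightarrow> vtx set" where
  "GY p q = B ` {..<q} \<union> Z ` {..<p} \<union> {W}"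

definition comb_edges :: "nat \<Rightarrow> vtx set set" where
  "comb_edges p = {{R i, R (i + 1)} | i. i < p} \<union> {{R i, A i} | i. i < p} \<union> {{R p, R'}}"

end

theory Submission
  imports Defs
begin

lemma nb_B:
  assumes "i < q" "C i \<subseteq> {..<p}"
  shows "open_nbhd (GE p q C) (B i) = A ` (C i) \<union> R ` {..p}"
  using assms by (auto simp: open_nbhd_def GE_def doubleton_eq_iff)

lemma nb_Z:
  assumes "i < p"
  shows "open_nbhd (GE p q C) (Z i) = {A i}"
  using assms by (auto simp: open_nbhd_def GE_def doubleton_eq_iff)

lemma nb_W:
  shows "open_nbhd (GE p q C) W = {R p, R'}"
  by (auto simp: open_nbhd_def GE_def doubleton_eq_iff)

lemma is_comb_p: "is_comb (GX p) (comb_edges p)"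
  unfolding is_comb_def
proof (intro exI conjI)
  let ?ps = "map R [0..<Suc p]" and ?ts = "map A [0..<p] @ [R']"
  show "?ps \<noteq> []" by simp
  show "length ?ts = length ?ps" by simp
  show "distinct (?ps @ ?ts)" by (auto simp: distinct_map inj_on_def)
  show "GX p = set ?ps \<union> set ?ts" by (auto simp: GX_def)
  show "comb_edges p = {{?ps ! i, ?ps ! (i + 1)} | i. i + 1 < length ?ps} \<union> {{?ps ! i, ?ts ! i} | i. i < length ?ps}"
  proof -
    have "{{?ps ! i, ?ts ! i} | i. i < length ?ps} = {{R i, A i} | i. i < p} \<union> {{R p, R'}}"
    proof (rule set_eqI, rule iffI)
      fix e assume "e \<in> {{?ps ! i, ?ts ! i} | i. i < length ?ps}"
      then obtain i where "i < length ?ps" "e = {?ps ! i, ?ts ! i}" by blast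
      then show "e \<in> {{R i, A i} | i. i < p} \<union> {{R p, R'}}"
        by (cases "i < p") (auto simp: nth_append simp del: upt_Suc)
    next
      fix e assume "e \<in> {{R i, A i} | i. i < p} \<union> {{R p, R'}}"
      then show "e \<in> {{?ps ! i, ?ts ! i} | i. i < length ?ps}"
      proof
        assume "e \<in> {{R i, A i} | i. i < p}"
        then obtain i where "i < p" "e = {R i, A i}" by blast
        then show ?thesis by (intro CollectI exI[of _ i]) (auto simp: nth_append simp del: upt_Suc)
      next
        assume "e \<in> {{R p, R'}}"
        then show ?thesis by (intro CollectI exI[of _ p]) (auto simp: nth_append simp del: upt_Suc)
      qed
    qed
    moreover have "{{?ps ! i, ?ps ! (i + 1)} | i. i + 1 < length ?ps} = {{R i, R (i + 1)} | i. i < p}"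
    proof (rule set_eqI, rule iffI)
      fix e assume "e \<in> {{R i, R (i + 1)} | i. i < p}"
      then obtain i where "i < p" "e = {R i, R (i + 1)}" by blast
      then show "e \<in> {{?ps ! i, ?ps ! (i + 1)} | i. i + 1 < length ?ps}"
        by (intro CollectI exI[of _ i]) (auto simp del: upt_Suc)
    next
      fix e assume "e \<in> {{?ps ! i, ?ps ! (i + 1)} | i. i + 1 < length ?ps}"
      then obtain i where "i + 1 < length ?ps" "e = {?ps ! i, ?ps ! (i + 1)}" by blast
      then show "e \<in> {{R i, R (i + 1)} | i. i < p}"
        by (intro CollectI exI[of _ i]) (auto simp del: upt_Suc)
    qed
    ultimately show ?thesis unfolding comb_edges_def by (simp only: Un_assoc)
  qed
qed

lemma rel_sym: "sym {(x, y). x \<in> U \<and> y \<in> U \<and> {x, y} \<in> ET}"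
  by (auto simp: sym_def insert_commute)

lemma subtree_B:
  assumes "C i \<subseteq> {..<p}"
  shows "induces_subtree (GX p) (comb_edges p) (A ` (C i) \<union> R ` {..p})"
proof -
  let ?U = "A ` (C i) \<union> R ` {..p}"
  let ?r = "{(x, y). x \<in> ?U \<and> y \<in> ?U \<and> {x, y} \<in> comb_edges p}"
  have R: "(R 0, R k) \<in> ?r\<^sup>*" if "k \<le> p" for k
    using that
  proof (induction k)
    case 0 then show ?case by simp
  next
    case (Suc k)
    have "(R k, R (Suc k)) \<in> ?r" using Suc.prems by (auto simp: comb_edges_def)
    with Suc show ?case by (meson Suc_leD rtrancl.rtrancl_into_rtrancl)
  qed
  have all: "(R 0, u) \<in> ?r\<^sup>*" if "u \<in> ?U" for u
  proof -
    from that consider k where "k \<in> C i" "u = A k" | k where "k \<le> p" "u = R k" by auto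
    then show ?thesis
    proof cases
      case (1 k)
      then have "k < p" using assms by auto
      then have "(R k, A k) \<in> ?r" using 1 by (auto simp: comb_edges_def)
      then show ?thesis using R[of k] \<open>k < p\<close> 1 by (meson less_imp_le rtrancl.rtrancl_into_rtrancl)
    next
      case (2 k) then show ?thesis using R by auto
    qed
  qed
  have s: "sym (?r\<^sup>*)" using rel_sym sym_rtrancl by blast
  show ?thesis unfolding induces_subtree_def
  proof (intro conjI ballI)
    show "?U \<noteq> {}" by auto
    show "?U \<subseteq> GX p" using assms by (auto simp: GX_def)
    fix u v assume "u \<in> ?U" "v \<in> ?U"
    then have "(u, R 0) \<in> ?r\<^sup>*" "(R 0, v) \<in> ?r\<^sup>*" using all s by (auto dest: symD)
    then show "(u, v) \<in> ?r\<^sup>*" by auto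
  qed
qed

lemma convex:
  assumes subsets: "\<forall>j<q. C j \<subseteq> {..<p}"
  shows "comb_convex_wrt (GE p q C) (GX p) (GY p q) (comb_edges p)"
  unfolding comb_convex_wrt_def
proof (intro conjI ballI is_comb_p)
  fix y assume "y \<in> GY p q"
  then consider i where "i < q" "y = B i" | i where "i < p" "y = Z i" | "y = W"
    by (auto simp: GY_def)
  then show "induces_subtree (GX p) (comb_edges p) (open_nbhd (GE p q C) y)"
  proof cases
    case (1 i) then show ?thesis using subsets nb_B subtree_B by metis
  next
    case (2 i) then show ?thesis by (auto simp: nb_Z induces_subtree_def GX_def)
  next
    case 3
    have "(R p, R') \<in> {(x, y). x \<in> {R p, R'} \<and> y \<in> {R p, R'} \<and> {x, y} \<in> comb_edges p}"
      by (auto simp: comb_edges_def)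
    then have "(R p, R') \<in> {(x, y). x \<in> {R p, R'} \<and> y \<in> {R p, R'} \<and> {x, y} \<in> comb_edges p}\<^sup>*"
      by blast
    moreover have "(R', R p) \<in> {(x, y). x \<in> {R p, R'} \<and> y \<in> {R p, R'} \<and> {x, y} \<in> comb_edges p}"
      by (auto simp: comb_edges_def insert_commute)
    ultimately show ?thesis using 3 by (auto simp: nb_W induces_subtree_def GX_def)
  qed
qed

lemma bip: "bipartite_parts (GV p q) (GE p q C) (GX p) (GY p q)"
  unfolding bipartite_parts_def
proof (intro conjI ballI)
  show "GX p \<inter> GY p q = {}" by (auto simp: GX_def GY_def)
  show "GX p \<union> GY p q = GV p q" by (auto simp: GX_def GY_def GV_def)
  fix e assume "e \<in> GE p q C"
  then show "\<exists>x\<in>GX p. \<exists>y\<in>GY p q. e = {x, y}"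
    unfolding GE_def GX_def GY_def by (auto simp: insert_commute)
qed


lemma cn_A:
  assumes "i < p"
  shows "closed_nbhd (GE p q C) (A i) \<union> closed_nbhd (GE p q C) (Z i) \<subseteq> {A i, Z i} \<union> B ` {j. j < q \<and> i \<in> C j}"
  using assms by (auto simp: closed_nbhd_def GE_def doubleton_eq_iff)

lemma cn_W: "closed_nbhd (GE p q C) W \<union> closed_nbhd (GE p q C) R' \<subseteq> {W, R p, R'}"
  by (auto simp: closed_nbhd_def GE_def doubleton_eq_iff)

lemma W_R'_edge: "{W, R'} \<in> GE p q C"
  by (auto simp: GE_def)

lemma AZ_edge: "i < p \<Longrightarrow> {A i, Z i} \<in> GE p q C"
  by (auto simp: GE_def)

lemma finite_GV: "finite (GV p q)"
  by (simp add: GV_def)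

lemma backward:
  assumes subsets: "\<forall>j<q. C j \<subseteq> {..<p}"
    and union: "(\<Union>j<q. C j) = {..<p}"
    and ved: "vertex_edge_dominating (GV p q) (GE p q C) D" and cD: "card D \<le> t + 1"
  shows "\<exists>Cs. is_cover {..<p} (C ` {..<q}) Cs \<and> card Cs \<le> t"
proof -
  define pick where "pick i = (SOME j. j < q \<and> i \<in> C j)" for i
  have pick: "pick i < q \<and> i \<in> C (pick i)" if "i < p" for i
  proof -
    have "\<exists>j. j < q \<and> i \<in> C j" using union that by blast
    then show ?thesis unfolding pick_def by (rule someI_ex)
  qed
  define f where "f v = (case v of B j \<Rightarrow> C j | A i \<Rightarrow> C (pick i) | Z i \<Rightarrow> C (pick i) | _ \<Rightarrow> {})" for v
  define H where "H = A ` {..<p} \<union> B ` {..<q} \<union> Z ` {..<p}"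
  have DV: "D \<subseteq> GV p q" using ved by (simp add: vertex_edge_dominating_def)
  then have fD: "finite D" using finite_GV finite_subset by blast
  have dom: "\<And>u v. {u, v} \<in> GE p q C \<Longrightarrow> (closed_nbhd (GE p q C) u \<union> closed_nbhd (GE p q C) v) \<inter> D \<noteq> {}"
    using ved by (simp add: vertex_edge_dominating_def)
  obtain x where x: "x \<in> D" "x \<in> {W, R p, R'}"
    using dom[OF W_R'_edge] cn_W by blast
  have xH: "x \<notin> H" using x by (auto simp: H_def)
  define Cs where "Cs = f ` (D \<inter> H)"
  have "card Cs \<le> card (D \<inter> H)" unfolding Cs_def using card_image_le fD by blast
  also have "\<dots> \<le> card (D - {x})" using xH fD by (intro card_mono) auto
  also have "\<dots> = card D - 1" using x fD by simp
  finally have c: "card Cs \<le> t" using cD by linarith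
  have sub: "Cs \<subseteq> C ` {..<q}"
  proof
    fix X assume "X \<in> Cs"
    then obtain v where "v \<in> H" "X = f v" unfolding Cs_def by blast
    then show "X \<in> C ` {..<q}" using pick by (auto simp: H_def f_def)
  qed
  have "\<Union>Cs = {..<p}"
  proof
    show "\<Union>Cs \<subseteq> {..<p}" using sub subsets by blast
    show "{..<p} \<subseteq> \<Union>Cs"
    proof
      fix i assume "i \<in> {..<p}"
      then have ip: "i < p" by simp
      obtain d where d: "d \<in> D" "d \<in> {A i, Z i} \<union> B ` {j. j < q \<and> i \<in> C j}"
        using dom[OF AZ_edge[OF ip]] cn_A[OF ip] by blast
      then have "d \<in> H" using ip by (auto simp: H_def)
      moreover have "i \<in> f d" using d pick[OF ip] by (auto simp: f_def)
      ultimately show "i \<in> \<Union>Cs" using d unfolding Cs_def by blast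
    qed
  qed
  then show ?thesis using sub c unfolding is_cover_def by blast
qed

lemma forward:
  assumes subsets: "\<forall>j<q. C j \<subseteq> {..<p}"
    and qp: "q \<le> p"
    and cov: "is_cover {..<p} (C ` {..<q}) Cs" and cC: "card Cs \<le> t"
  shows "\<exists>D. vertex_edge_dominating (GV p q) (GE p q C) D \<and> card D \<le> t + 1"
proof -
  define idx where "idx X = (SOME j. j < q \<and> C j = X)" for X
  have idx: "idx X < q \<and> C (idx X) = X" if "X \<in> Cs" for X
  proof -
    have "\<exists>j. j < q \<and> C j = X" using cov that unfolding is_cover_def by blast
    then show ?thesis unfolding idx_def by (rule someI_ex)
  qed
  have fC: "finite Cs"
    using cov unfolding is_cover_def by (meson finite_imageI finite_lessThan finite_subset)
  define D where "D = insert W ((\<lambda>X. B (idx X)) ` Cs)"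
  have "card D \<le> Suc (card ((\<lambda>X. B (idx X)) ` Cs))" unfolding D_def
    using fC by (simp add: card_insert_if)
  also have "\<dots> \<le> Suc (card Cs)" using card_image_le fC by auto
  finally have c: "card D \<le> t + 1" using cC by simp
  have DV: "D \<subseteq> GV p q" using idx unfolding D_def GV_def by blast
  have covi: "\<exists>X\<in>Cs. i \<in> X" if "i < p" for i
    using cov that unfolding is_cover_def by blast
  have Ai: "closed_nbhd (GE p q C) (A i) \<inter> D \<noteq> {}" if ip: "i < p" for i
  proof -
    obtain X where X: "X \<in> Cs" "i \<in> X" using covi[OF ip] by blast
    then have "{A i, B (idx X)} \<in> GE p q C" using idx[OF X(1)] ip unfolding GE_def by blast
    then have "B (idx X) \<in> closed_nbhd (GE p q C) (A i)" by (simp add: closed_nbhd_def)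
    moreover have "B (idx X) \<in> D" using X by (simp add: D_def)
    ultimately show ?thesis by blast
  qed
  have Rj: "closed_nbhd (GE p q C) (R j) \<inter> D \<noteq> {}" if jp: "j \<le> p" "0 < p" for j
  proof -
    obtain X where X: "X \<in> Cs" "0 \<in> X" using covi[OF jp(2)] by blast
    then have "{B (idx X), R j} \<in> GE p q C" using idx[OF X(1)] jp unfolding GE_def by blast
    then have "{R j, B (idx X)} \<in> GE p q C" by (simp add: insert_commute)
    then have "B (idx X) \<in> closed_nbhd (GE p q C) (R j)" by (simp add: closed_nbhd_def)
    moreover have "B (idx X) \<in> D" using X by (simp add: D_def)
    ultimately show ?thesis by blast
  qed
  have Wn: "closed_nbhd (GE p q C) W \<inter> D \<noteq> {}"
    by (auto simp: closed_nbhd_def D_def)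
  have key: "\<exists>x\<in>e. closed_nbhd (GE p q C) x \<inter> D \<noteq> {}" if "e \<in> GE p q C" for e
  proof -
    have "e \<in> {{A i, B j} |i j. i < p \<and> j < q \<and> i \<in> C j} \<or> e \<in> {{A i, Z i} |i. i < p}
      \<or> e \<in> {{B i, R j} |i j. i < q \<and> j \<le> p} \<or> e \<in> {{R p, W}, {W, R'}}"
      using that unfolding GE_def by blast
    moreover
    {assume "e \<in> {{A i, B j} |i j. i < p \<and> j < q \<and> i \<in> C j}"
    then have ?thesis using Ai by blast}
    moreover
    {assume "e \<in> {{A i, Z i} |i. i < p}"
    then have ?thesis using Ai by blast}
    moreover
    {assume "e \<in> {{B i, R j} |i j. i < q \<and> j \<le> p}"
    then obtain i j where "e = {B i, R j}" "i < q" "j \<le> p" by blast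
    then have ?thesis using Rj[of j] qp by auto}
    moreover
    {assume "e \<in> {{R p, W}, {W, R'}}"
    then have ?thesis using Wn by blast}
    ultimately show ?thesis by blast
  qed
  have "vertex_edge_dominating (GV p q) (GE p q C) D"
    unfolding vertex_edge_dominating_def
  proof (intro conjI allI impI DV)
    fix u v assume "{u, v} \<in> GE p q C"
    from key[OF this] obtain x where "x \<in> {u, v}" "closed_nbhd (GE p q C) x \<inter> D \<noteq> {}" by blast
    then show "(closed_nbhd (GE p q C) u \<union> closed_nbhd (GE p q C) v) \<inter> D \<noteq> {}" by blast
  qed
  with c show ?thesis by blast
qed

theorem lemma4:
  fixes p q :: nat and C :: "nat \<Rightarrow> nat set"
  assumes subsets: "\<forall>j<q. C j \<subseteq> {..<p}"
    and qp: "q \<le> p"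
    and union: "(\<Union>j<q. C j) = {..<p}"
  shows "bipartite_parts (GV p q) (GE p q C) (GX p) (GY p q)
       \<and> comb_convex_wrt (GE p q C) (GX p) (GY p q) (comb_edges p)
       \<and> comb_convex_bipartite (GV p q) (GE p q C) (GX p) (GY p q)
       \<and> (\<forall>t::nat.
            (\<exists>Cs. is_cover {..<p} (C ` {..<q}) Cs \<and> card Cs \<le> t)
            \<longleftrightarrow> (\<exists>D. vertex_edge_dominating (GV p q) (GE p q C) D \<and> card D \<le> t + 1))"
  using bip convex[OF subsets] forward[OF subsets qp] backward[OF subsets union]
  unfolding comb_convex_bipartite_def by blast

end
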